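(* Let $m\ge 2$ and let $v_1,\dots,v_m$ be distinct values. Enforcing GAC on $\mathrm{Precedence}([v_1,\dots,v_m],[X_1,\dots,X_n])$ is strictly stronger than enforcing GAC on each of the constraints $\mathrm{Precedence}([v_i,v_j],[X_1,\dots,X_n])$ for $1\le i<j\le m$. That is: (i) for all finite domains of $X_1,\dots,X_n$, if $\mathrm{Precedence}([v_1,\dots,v_m],[X_1,\dots,X_n])$ is GAC then every $\mathrm{Precedence}([v_i,v_j],[X_1,\dots,X_n])$ with $1\le i<j\le m$ is GAC; and (ii) there exist $n$, $m$, values and domains for which every $\mathrm{Precedence}([v_i,v_j],[X_1,\dots,X_n])$ with $1\le i<j\le m$ is GAC but $\mathrm{Precedence}([v_1,\dots,v_m],[X_1,\dots,X_n])$ is not GAC.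
   Context: $X_1,\dots,X_n$ are finite domain variables, each with a finite domain $D(X_i)$. A support of a constraint is an assignment of a value from its domain to each variable that satisfies the constraint; a constraint is generalized arc consistent (GAC) iff every value in every variable's domain belongs to some support. For distinct values $a,b$, $\mathrm{Precedence}([a,b],[X_1,\dots,X_n])$ holds iff $\min\{i \mid X_i=a \text{ or } i=n+1\} < \min\{i \mid X_i=b \text{ or } i=n+2\}$ (i.e. if $b$ is taken by some $X_i$ then $a$ is taken by some $X_l$ with $l<i$). For distinct values $v_1,\dots,v_m$, $\mathrm{Precedence}([v_1,\dots,v_m],[X_1,\dots,X_n])$ holds iff $\mathrm{Precedence}([v_i,v_{i+1}],[X_1,\dots,X_n])$ holds for all $1\le i<m$ (equivalently, for all $1\le i<j\le m$). *)

theory Defs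
  imports Main
begin

text \<open>Variables X_1..X_n are indexed by 1..n; an assignment is a function
  s :: nat => 'a, with s i the value of X_i. Domains are D :: nat => 'a set.\<close>

definition valid_assignment :: "nat \<Rightarrow> (nat \<Rightarrow> 'a set) \<Rightarrow> (nat \<Rightarrow> 'a) \<Rightarrow> bool" where
  "valid_assignment n D s \<longleftrightarrow> (\<forall>i\<in>{1..n}. s i \<in> D i)"

definition precedence2 :: "nat \<Rightarrow> 'a \<Rightarrow> 'a \<Rightarrow> (nat \<Rightarrow> 'a) \<Rightarrow> bool" where
  "precedence2 n a b s \<longleftrightarrow>
     (LEAST i::nat. (1 \<le> i \<and> i \<le> n \<and> s i = a) \<or> i = n + 1)
   < (LEAST i::nat. (1 \<le> i \<and> i \<le> n \<and> s i = b) \<or> i = n + 2)"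

text \<open>Precedence([v_1..v_m],[X_1..X_n]): all consecutive pairs (list indices 0-based).\<close>
definition precedence :: "nat \<Rightarrow> 'a list \<Rightarrow> (nat \<Rightarrow> 'a) \<Rightarrow> bool" where
  "precedence n vs s \<longleftrightarrow> (\<forall>i. i + 1 < length vs \<longrightarrow> precedence2 n (vs ! i) (vs ! (i + 1)) s)"

definition GAC :: "nat \<Rightarrow> (nat \<Rightarrow> 'a set) \<Rightarrow> ((nat \<Rightarrow> 'a) \<Rightarrow> bool) \<Rightarrow> bool" where
  "GAC n D C \<longleftrightarrow> (\<forall>i\<in>{1..n}. \<forall>d\<in>D i. \<exists>s. valid_assignment n D s \<and> s i = d \<and> C s)"

end

theory Submission
  imports Defs
begin

lemma prec2_iff:
  "precedence2 n a b s \<longleftrightarrow> (\<forall>k\<in>{1..n}. s k = b \<longrightarrow> (\<exists>l\<in>{1..<k}. s l = a))"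
proof -
  define P where "P = (\<lambda>x i. (1 \<le> i \<and> i \<le> n \<and> s i = x))"
  define fa where "fa = (LEAST i::nat. P a i \<or> i = n + 1)"
  define gb where "gb = (LEAST i::nat. P b i \<or> i = n + 2)"
  have pa: "P a fa \<or> fa = n + 1" unfolding fa_def by (rule LeastI[of _ "n+1"]) simp
  have fa_le: "fa \<le> n + 1" unfolding fa_def by (rule Least_le) simp
  have pb: "P b gb \<or> gb = n + 2" unfolding gb_def by (rule LeastI[of _ "n+2"]) simp
  have fa_min: "\<And>l. P a l \<Longrightarrow> fa \<le> l" unfolding fa_def by (rule Least_le) simp
  have gb_min: "\<And>l. P b l \<Longrightarrow> gb \<le> l" unfolding gb_def by (rule Least_le) simp
  have eq: "precedence2 n a b s \<longleftrightarrow> fa < gb"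
    unfolding precedence2_def fa_def gb_def P_def by simp
  show ?thesis
  proof
    assume "precedence2 n a b s"
    hence lt: "fa < gb" using eq by simp
    show "\<forall>k\<in>{1..n}. s k = b \<longrightarrow> (\<exists>l\<in>{1..<k}. s l = a)"
    proof (intro ballI impI)
      fix k assume k: "k \<in> {1..n}" "s k = b"
      hence "gb \<le> k" using gb_min P_def by auto
      hence "fa < k" using lt by simp
      hence "P a fa" using pa k by auto
      thus "\<exists>l\<in>{1..<k}. s l = a" using \<open>fa < k\<close> P_def by auto
    qed
  next
    assume H: "\<forall>k\<in>{1..n}. s k = b \<longrightarrow> (\<exists>l\<in>{1..<k}. s l = a)"
    show "precedence2 n a b s"
    proof (cases "P b gb")
      case True
      then obtain l where l: "l \<in> {1..<gb}" "s l = a" using H P_def by auto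
      have "l \<le> n" using l True P_def by auto
      hence "fa \<le> l" using fa_min l P_def by auto
      thus ?thesis using eq l by auto
    next
      case False
      thus ?thesis using eq pb fa_le by auto
    qed
  qed
qed

lemma prec2_trans:
  "precedence2 n a b s \<Longrightarrow> precedence2 n b c s \<Longrightarrow> precedence2 n a c s"
proof -
  assume ab: "precedence2 n a b s" and bc: "precedence2 n b c s"
  show ?thesis unfolding prec2_iff
  proof (intro ballI impI)
    fix k assume k: "k \<in> {1..n}" "s k = c"
    then obtain l where l: "l \<in> {1..<k}" "s l = b" using bc unfolding prec2_iff by blast
    hence "l \<in> {1..n}" using k by auto
    then obtain l' where l': "l' \<in> {1..<l}" "s l' = a" using ab l unfolding prec2_iff by blast
    thus "\<exists>l\<in>{1..<k}. s l = a" using l by auto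
  qed
qed

lemma prec_pair:
  assumes P: "precedence n vs s"
  shows "j < length vs \<Longrightarrow> i < j \<Longrightarrow> precedence2 n (vs ! i) (vs ! j) s"
proof (induction j)
  case 0 thus ?case by simp
next
  case (Suc j)
  have "j + 1 < length vs" using Suc.prems(1) by simp
  hence st: "precedence2 n (vs ! j) (vs ! Suc j) s"
    using P unfolding precedence_def by simp
  show ?case
  proof (cases "i = j")
    case True thus ?thesis using st by simp
  next
    case False
    hence "i < j" using Suc.prems(2) by simp
    moreover have "j < length vs" using Suc.prems(1) by simp
    ultimately have "precedence2 n (vs ! i) (vs ! j) s" using Suc.IH by blast
    thus ?thesis using st by (rule prec2_trans)
  qed
qed

lemma GAC_I:
  assumes "\<forall>i\<in>{1..n}. \<forall>d\<in>D i. \<exists>s\<in>S. valid_assignment n D s \<and> s i = d \<and> C s"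
  shows "GAC n D C"
  unfolding GAC_def
proof (intro ballI)
  fix i d assume "i \<in> {1..n}" "d \<in> D i"
  then obtain s where "s \<in> S" "valid_assignment n D s \<and> s i = d \<and> C s" using assms by blast
  thus "\<exists>s. valid_assignment n D s \<and> s i = d \<and> C s" by blast
qed

lemma int3: "{1..3::nat} = {1,2,3}" by auto
lemma int2: "{1..<2::nat} = {1}" by auto
lemma int3': "{1..<3::nat} = {1,2}" by auto
lemma int3s: "{Suc 0..3::nat} = {Suc 0,2,3}" by auto
lemma int2s: "{Suc 0..<2::nat} = {Suc 0}" by auto
lemma int3's: "{Suc 0..<3::nat} = {Suc 0,2}" by auto
lemma int1s: "{Suc 0..<Suc 0::nat} = {}" by auto
lemma int1: "{1..<1::nat} = {}" by auto

definition "DD = (\<lambda>k::nat. if k = 1 then {0,3} else if k = 2 then {1,3} else {1,2::nat})"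
definition "sA = (\<lambda>k::nat. if k = 1 then 0 else if k = 2 then 1 else (2::nat))"
definition "sB = (\<lambda>k::nat. if k = 1 then 3 else if k = 2 then 3 else (1::nat))"
definition "sC = (\<lambda>k::nat. if k = 1 then 0 else if k = 2 then 1 else (1::nat))"
definition "sD = (\<lambda>k::nat. if k = 1 then 3 else if k = 2 then 3 else (2::nat))"

lemma sA1[simp]: "sA (Suc 0) = 0" by (simp add: sA_def)
lemma sA2[simp]: "sA 2 = 1" by (simp add: sA_def)
lemma sA3[simp]: "sA 3 = 2" by (simp add: sA_def)
lemma sA_valid: "valid_assignment 3 DD sA" unfolding valid_assignment_def int3 DD_def by (simp add: int3s)
lemma sB1[simp]: "sB (Suc 0) = 3" by (simp add: sB_def)
lemma sB2[simp]: "sB 2 = 3" by (simp add: sB_def)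
lemma sB3[simp]: "sB 3 = 1" by (simp add: sB_def)
lemma sB_valid: "valid_assignment 3 DD sB" unfolding valid_assignment_def int3 DD_def by (simp add: int3s)
lemma sC1[simp]: "sC (Suc 0) = 0" by (simp add: sC_def)
lemma sC2[simp]: "sC 2 = 1" by (simp add: sC_def)
lemma sC3[simp]: "sC 3 = 1" by (simp add: sC_def)
lemma sC_valid: "valid_assignment 3 DD sC" unfolding valid_assignment_def int3 DD_def by (simp add: int3s)
lemma sD1[simp]: "sD (Suc 0) = 3" by (simp add: sD_def)
lemma sD2[simp]: "sD 2 = 3" by (simp add: sD_def)
lemma sD3[simp]: "sD 3 = 2" by (simp add: sD_def)
lemma sD_valid: "valid_assignment 3 DD sD" unfolding valid_assignment_def int3 DD_def by (simp add: int3s)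
lemma p01sC: "precedence2 3 0 (Suc 0) sC" unfolding prec2_iff int3 sC_def by (simp add: int2s int3's int1s)
lemma p01sD: "precedence2 3 0 (Suc 0) sD" unfolding prec2_iff int3 sD_def by (simp add: int2s int3's int1s)
lemma p02sA: "precedence2 3 0 2 sA" unfolding prec2_iff int3 sA_def by (simp add: int2s int3's int1s)
lemma p02sB: "precedence2 3 0 2 sB" unfolding prec2_iff int3 sB_def by (simp add: int2s int3's int1s)
lemma p12sA: "precedence2 3 (Suc 0) 2 sA" unfolding prec2_iff int3 sA_def by (simp add: int2s int3's int1s)
lemma p12sB: "precedence2 3 (Suc 0) 2 sB" unfolding prec2_iff int3 sB_def by (simp add: int2s int3's int1s)
lemma DD1: "DD (Suc 0) = {0,3}" and DD2: "DD 2 = {1,3}" and DD3: "DD 3 = {1,2}" by (simp_all add: DD_def)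
lemma g01: "GAC 3 DD (precedence2 3 0 1)"
  by (rule GAC_I[where S="{sC,sD}"]) (simp add: int3 int3s DD1 DD2 DD3 sC_valid sD_valid p01sC p01sD)
lemma g02: "GAC 3 DD (precedence2 3 0 2)"
  by (rule GAC_I[where S="{sA,sB}"]) (simp add: int3 int3s DD1 DD2 DD3 sA_valid sB_valid p02sA p02sB)
lemma g12: "GAC 3 DD (precedence2 3 1 2)"
  by (rule GAC_I[where S="{sA,sB}"]) (simp add: int3 int3s DD1 DD2 DD3 sA_valid sB_valid p12sA p12sB)

lemma notg: "\<not> GAC 3 DD (precedence 3 [0,1,2])"
proof
  assume "GAC 3 DD (precedence 3 [0,1,2])"
  then obtain s where s: "valid_assignment 3 DD s" "s 1 = 3" "precedence 3 [0,1,2] s"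
  proof -
    have "1 \<in> {1..3::nat}" "(3::nat) \<in> DD 1" by (auto simp: DD_def)
    thus ?thesis using \<open>GAC 3 DD (precedence 3 [0,1,2])\<close> that unfolding GAC_def by blast
  qed
  have p1: "precedence2 3 0 1 s" and p2: "precedence2 3 1 2 s"
    using s(3) unfolding precedence_def by (auto dest: spec[of _ 0] spec[of _ 1])
  have i23: "2 \<in> {1..3::nat}" "3 \<in> {1..3::nat}" by auto
  have v2: "s 2 \<in> {1,3}" using bspec[OF s(1)[unfolded valid_assignment_def] i23(1)] by (simp add: DD_def)
  have v3: "s 3 \<in> {1,2}" using bspec[OF s(1)[unfolded valid_assignment_def] i23(2)] by (simp add: DD_def)
  have c1: "\<And>k. k \<in> {1..3} \<Longrightarrow> s k = 1 \<Longrightarrow> \<exists>l\<in>{1..<k}. s l = 0"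
    using p1 unfolding prec2_iff by blast
  have c2: "\<And>k. k \<in> {1..3} \<Longrightarrow> s k = 2 \<Longrightarrow> \<exists>l\<in>{1..<k}. s l = 1"
    using p2 unfolding prec2_iff by blast
  have l2: "\<And>l::nat. l \<in> {1..<2} \<Longrightarrow> l = 1" by auto
  have l3: "\<And>l::nat. l \<in> {1..<3} \<Longrightarrow> l = 1 \<or> l = 2" by auto
  have "s 2 \<noteq> 1"
  proof
    assume "s 2 = 1"
    then obtain l where L: "l \<in> {1..<2}" "s l = 0" using c1[of 2] by auto
    hence "l = 1" using l2 by blast
    thus False using L(2) s(2) by simp
  qed
  hence s2: "s 2 = 3" using v2 by auto
  have "s 3 \<noteq> 1"
  proof
    assume "s 3 = 1"
    then obtain l where L: "l \<in> {1..<3}" "s l = 0" using c1[of 3] by auto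
    hence "l = 1 \<or> l = 2" using l3 by blast
    thus False using L(2) s(2) s2 by auto
  qed
  hence s3: "s 3 = 2" using v3 by auto
  then obtain l where L: "l \<in> {1..<3}" "s l = 1" using c2[of 3] by auto
  hence "l = 1 \<or> l = 2" using l3 by blast
  thus False using L(2) s(2) s2 by auto
qed

theorem theorem1:
  shows "(\<forall>(n::nat) (vs::'a list) (D::nat \<Rightarrow> 'a set).
            length vs \<ge> 2 \<and> distinct vs \<and> (\<forall>i\<in>{1..n}. finite (D i)) \<and>
            GAC n D (precedence n vs)
            \<longrightarrow> (\<forall>i j. i < j \<and> j < length vs \<longrightarrow> GAC n D (precedence2 n (vs ! i) (vs ! j))))
       \<and> (\<exists>(n::nat) (vs::nat list) (D::nat \<Rightarrow> nat set).
            length vs \<ge> 2 \<and> distinct vs \<and> (\<forall>i\<in>{1..n}. finite (D i)) \<and>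
            (\<forall>i j. i < j \<and> j < length vs \<longrightarrow> GAC n D (precedence2 n (vs ! i) (vs ! j))) \<and>
            \<not> GAC n D (precedence n vs))"
proof
  show "\<forall>(n::nat) (vs::'a list) (D::nat \<Rightarrow> 'a set).
            length vs \<ge> 2 \<and> distinct vs \<and> (\<forall>i\<in>{1..n}. finite (D i)) \<and>
            GAC n D (precedence n vs)
            \<longrightarrow> (\<forall>i j. i < j \<and> j < length vs \<longrightarrow> GAC n D (precedence2 n (vs ! i) (vs ! j)))"
  proof (intro allI impI)
    fix n :: nat and vs :: "'a list" and D :: "nat \<Rightarrow> 'a set" and i j :: nat
    assume H: "length vs \<ge> 2 \<and> distinct vs \<and> (\<forall>i\<in>{1..n}. finite (D i)) \<and> GAC n D (precedence n vs)"
      and ij: "i < j \<and> j < length vs"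
    show "GAC n D (precedence2 n (vs ! i) (vs ! j))"
      unfolding GAC_def
    proof (intro ballI)
      fix k d assume k: "k \<in> {1..n}" and d: "d \<in> D k"
      obtain s where "valid_assignment n D s" "s k = d" "precedence n vs s"
        using H k d unfolding GAC_def by blast
      thus "\<exists>s. valid_assignment n D s \<and> s k = d \<and> precedence2 n (vs ! i) (vs ! j) s"
        using prec_pair[of n vs _ j i] ij by blast
    qed
  qed
  have pairs: "\<forall>i j. i < j \<and> j < length [0,1,2::nat] \<longrightarrow> GAC 3 DD (precedence2 3 ([0,1,2] ! i) ([0,1,2] ! j))"
  proof (intro allI impI)
    fix i j :: nat assume "i < j \<and> j < length [0,1,2::nat]"
    hence "(i = 0 \<and> j = 1) \<or> (i = 0 \<and> j = 2) \<or> (i = 1 \<and> j = 2)" by auto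
    thus "GAC 3 DD (precedence2 3 ([0,1,2] ! i) ([0,1,2] ! j))" using g01 g02 g12 by auto
  qed
  have fin: "\<forall>i\<in>{1..3}. finite (DD i)" by (simp add: DD_def)
  show "\<exists>(n::nat) (vs::nat list) (D::nat \<Rightarrow> nat set).
            length vs \<ge> 2 \<and> distinct vs \<and> (\<forall>i\<in>{1..n}. finite (D i)) \<and>
            (\<forall>i j. i < j \<and> j < length vs \<longrightarrow> GAC n D (precedence2 n (vs ! i) (vs ! j))) \<and>
            \<not> GAC n D (precedence n vs)"
    apply (rule exI[of _ 3], rule exI[of _ "[0,1,2]"], rule exI[of _ DD])
    using pairs fin notg by simp
qed

end
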